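(* Let $a, b \in \mathbb Z_g$ and let $1 \leq i < j \leq k$. Suppose that $\vec \theta \in \mathbb R^d$ and $\epsilon > 0$ have the property that for any pair of vectors $\vec x, \vec y \in (\mathbb Z_g)^k$, there are $z \in \mathbb Z$ and $\epsilon_1$ with $|\epsilon_1| < \epsilon$ such that $\vec \theta \cdot Z(\vec x) - \vec \theta \cdot Z(\vec y) = 2 \pi z + \epsilon_1$. Then there exists $\epsilon_2$ with $|\epsilon_2| < 2 \epsilon$ such that \[ \theta_{\{i,j\},a} + \theta_{\{i,j\},b} \equiv \theta_{\{i,j\},a+b} + \epsilon_2 \pmod{2 \pi},\] where the undefined value $\theta_{\{i,j\},0}$ is understood to be $0$.
   Context: Let $g\ge 2$, $k\ge 2$ be integers, $\mathbb Z_g$ the integers mod $g$, and $d=\binom{k}{2}(g-1)$. Index the coordinates of $\mathbb R^d$ by pairs $(\{i,j\},a)$ with $1\le i<j\le k$ and $a\in\mathbb Z_g\setminus\{0\}$. Define $Z:(\mathbb Z_g)^k\to\mathbb R^d$ by $[Z(\vec x)]_{\{i,j\},a}=1-1/g$ if $x_i-x_j=a$ and $-1/g$ otherwise. *)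

theory Defs
  imports Complex_Main
begin

(* Coordinate ({i,j},a) of Z(x), for 1 <= i < j <= k and a in {1..g-1}.
   Elements of Z_g are represented by naturals in {0..<g}; x is a function on indices 1..k. *)
definition Zcoord :: "nat \<Rightarrow> (nat \<Rightarrow> nat) \<Rightarrow> nat \<Rightarrow> nat \<Rightarrow> nat \<Rightarrow> real" where
  "Zcoord g x i j a =
     (if (int (x i) - int (x j)) mod int g = int a then 1 - 1 / real g else - 1 / real g)"

definition dotZ :: "nat \<Rightarrow> nat \<Rightarrow> (nat \<Rightarrow> nat \<Rightarrow> nat \<Rightarrow> real) \<Rightarrow> (nat \<Rightarrow> nat) \<Rightarrow> real" where
  "dotZ g k \<theta> x = (\<Sum>i\<in>{1..k}. \<Sum>j\<in>{i<..k}. \<Sum>a\<in>{1..<g}. \<theta> i j a * Zcoord g x i j a)"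

definition theta0 :: "nat \<Rightarrow> (nat \<Rightarrow> nat \<Rightarrow> nat \<Rightarrow> real) \<Rightarrow> nat \<Rightarrow> nat \<Rightarrow> nat \<Rightarrow> real" where
  "theta0 g \<theta> i j a = (if a mod g = 0 then 0 else \<theta> i j (a mod g))"

end

theory Submission
  imports Defs
begin

lemma Zcoord_cong:
  "x p = y p \<Longrightarrow> x q = y q \<Longrightarrow> Zcoord g x p q c = Zcoord g y p q c"
  by (simp add: Zcoord_def)

lemma S_eval:
  fixes \<theta> :: "nat \<Rightarrow> nat \<Rightarrow> nat \<Rightarrow> real"
  assumes g: "g \<ge> 2"
  shows "(\<Sum>c\<in>{1..<g}. \<theta> p q c * Zcoord g x p q c)
       = theta0 g \<theta> p q (nat ((int (x p) - int (x q)) mod int g))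
         - (1 / real g) * (\<Sum>c\<in>{1..<g}. \<theta> p q c)"
proof -
  define m where "m = nat ((int (x p) - int (x q)) mod int g)"
  have mg: "m < g" unfolding m_def using g
    by (metis Euclidean_Rings.pos_mod_bound Euclidean_Rings.pos_mod_sign
        int_ops(1) less_le_trans nat_less_iff of_nat_less_iff pos2)
  have eq: "\<And>c. ((int (x p) - int (x q)) mod int g = int c) = (c = m)"
    unfolding m_def using g by auto
  have "(\<Sum>c\<in>{1..<g}. \<theta> p q c * Zcoord g x p q c)
      = (\<Sum>c\<in>{1..<g}. (if c = m then \<theta> p q c else 0) - (1/real g) * \<theta> p q c)"
    by (rule sum.cong) (auto simp: Zcoord_def eq algebra_simps)
  also have "\<dots> = (\<Sum>c\<in>{1..<g}. (if c = m then \<theta> p q c else 0)) - (1/real g) * (\<Sum>c\<in>{1..<g}. \<theta> p q c)"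
    by (simp add: sum_subtractf sum_distrib_left)
  also have "(\<Sum>c\<in>{1..<g}. (if c = m then \<theta> p q c else 0)) = theta0 g \<theta> p q m"
    using mg by (auto simp: theta0_def)
  finally show ?thesis unfolding m_def .
qed

lemma double_sum_single:
  fixes h :: "nat \<Rightarrow> nat \<Rightarrow> real"
  assumes "1 \<le> i" "i < j" "j \<le> k"
    and "\<And>p q. p \<in> {1..k} \<Longrightarrow> q \<in> {p<..k} \<Longrightarrow> (p, q) \<noteq> (i, j) \<Longrightarrow> h p q = 0"
  shows "(\<Sum>p\<in>{1..k}. \<Sum>q\<in>{p<..k}. h p q) = h i j"
proof -
  have "(\<Sum>p\<in>{1..k}. \<Sum>q\<in>{p<..k}. h p q) = (\<Sum>q\<in>{i<..k}. h i q) + (\<Sum>p\<in>{1..k} - {i}. \<Sum>q\<in>{p<..k}. h p q)"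
    by (rule sum.remove) (use assms in auto)
  also have "(\<Sum>p\<in>{1..k} - {i}. \<Sum>q\<in>{p<..k}. h p q) = 0"
    using assms(4) by (auto intro!: sum.neutral)
  also have "(\<Sum>q\<in>{i<..k}. h i q) = h i j + (\<Sum>q\<in>{i<..k} - {j}. h i q)"
    by (rule sum.remove) (use assms in auto)
  also have "(\<Sum>q\<in>{i<..k} - {j}. h i q) = 0"
    using assms by (auto intro!: sum.neutral)
  finally show ?thesis by simp
qed

theorem lemma2p1:
  fixes g k i j a b :: nat and \<theta> :: "nat \<Rightarrow> nat \<Rightarrow> nat \<Rightarrow> real" and \<epsilon> :: real
  assumes "g \<ge> 2" and "k \<ge> 2"
    and "a < g" and "b < g"
    and "1 \<le> i" and "i < j" and "j \<le> k"
    and "\<epsilon> > 0"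
    and "\<forall>x y. (\<forall>l\<in>{1..k}. x l < g) \<and> (\<forall>l\<in>{1..k}. y l < g) \<longrightarrow>
           (\<exists>z::int. \<exists>\<epsilon>1. \<bar>\<epsilon>1\<bar> < \<epsilon> \<and>
              dotZ g k \<theta> x - dotZ g k \<theta> y = 2 * pi * real_of_int z + \<epsilon>1)"
  shows "\<exists>\<epsilon>2. \<bar>\<epsilon>2\<bar> < 2 * \<epsilon> \<and> (\<exists>z::int.
           theta0 g \<theta> i j a + theta0 g \<theta> i j b
             = theta0 g \<theta> i j ((a + b) mod g) + \<epsilon>2 + 2 * pi * real_of_int z)"
proof -
  note g = assms(1)
  define t where "t = (g - b) mod g"
  have tg: "t < g" using g unfolding t_def by simp
  define X :: "nat \<Rightarrow> nat \<Rightarrow> nat \<Rightarrow> nat" where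
    "X s u l = (if l = i then s else if l = j then u else 0)" for s u l
  have Xg: "s < g \<Longrightarrow> u < g \<Longrightarrow> \<forall>l\<in>{1..k}. X s u l < g" for s u
    using g by (auto simp: X_def)
  define x1 x2 x3 x4 where "x1 = X a t" "x2 = X a 0" "x3 = X 0 t" "x4 = X 0 0"
  have g0: "0 < g" using g by simp
  obtain z1 e1 where e1: "\<bar>e1\<bar> < \<epsilon>" and h1: "dotZ g k \<theta> x1 - dotZ g k \<theta> x2 = 2 * pi * real_of_int z1 + e1"
    using assms(9) Xg[OF assms(3) tg] Xg[OF assms(3) g0] unfolding x1_x2_x3_x4_def by blast
  obtain z2 e2 where e2: "\<bar>e2\<bar> < \<epsilon>" and h2: "dotZ g k \<theta> x4 - dotZ g k \<theta> x3 = 2 * pi * real_of_int z2 + e2"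
    using assms(9) Xg[OF g0 g0] Xg[OF g0 tg] unfolding x1_x2_x3_x4_def by blast
  define S where "S x p q = (\<Sum>c\<in>{1..<g}. \<theta> p q c * Zcoord g x p q c)" for x p q
  have dS: "dotZ g k \<theta> x = (\<Sum>p\<in>{1..k}. \<Sum>q\<in>{p<..k}. S x p q)" for x
    by (simp add: dotZ_def S_def)
  have comb: "dotZ g k \<theta> x1 - dotZ g k \<theta> x2 - dotZ g k \<theta> x3 + dotZ g k \<theta> x4
     = (\<Sum>p\<in>{1..k}. \<Sum>q\<in>{p<..k}. S x1 p q - S x2 p q - S x3 p q + S x4 p q)"
    unfolding dS by (simp only: sum_subtractf[symmetric] sum.distrib[symmetric])
  also have "\<dots> = S x1 i j - S x2 i j - S x3 i j + S x4 i j"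
  proof (rule double_sum_single[OF assms(5,6,7)])
    fix p q assume pq: "p \<in> {1..k}" "q \<in> {p<..k}" "(p, q) \<noteq> (i, j)"
    hence "j \<noteq> p \<and> j \<noteq> q \<or> i \<noteq> p \<and> i \<noteq> q" using assms(6) by auto
    thus "S x1 p q - S x2 p q - S x3 p q + S x4 p q = 0"
    proof
      assume "j \<noteq> p \<and> j \<noteq> q"
      hence "S x1 p q = S x2 p q" "S x3 p q = S x4 p q"
        unfolding S_def x1_x2_x3_x4_def
        by (auto intro!: sum.cong arg_cong2[where f="(*)"] Zcoord_cong simp: X_def)
      thus ?thesis by simp
    next
      assume "i \<noteq> p \<and> i \<noteq> q"
      hence "S x1 p q = S x3 p q" "S x2 p q = S x4 p q"
        unfolding S_def x1_x2_x3_x4_def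
        by (auto intro!: sum.cong arg_cong2[where f="(*)"] Zcoord_cong simp: X_def)
      thus ?thesis by simp
    qed
  qed
  also have "\<dots> = theta0 g \<theta> i j ((a + b) mod g) - theta0 g \<theta> i j a - theta0 g \<theta> i j b"
  proof -
    have ij: "i \<noteq> j" using assms(6) by simp
    have m1: "nat ((int a - int t) mod int g) = (a + b) mod g"
    proof (cases "b = 0")
      case True thus ?thesis using assms(3) by (simp add: t_def)
    next
      case False
      hence "t = g - b" using assms(4) by (simp add: t_def)
      hence "int a - int t = int (a + b) - int g" using assms(4) by simp
      hence "(int a - int t) mod int g = int (a + b) mod int g" by (metis minus_mod_self2)
      thus ?thesis by (metis nat_int zmod_int)
    qed
    have m3: "nat ((0 - int t) mod int g) = b"
    proof (cases "b = 0")
      case True thus ?thesis by (simp add: t_def)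
    next
      case False
      hence "t = g - b" using assms(4) by (simp add: t_def)
      hence "0 - int t = int b - int g" using assms(4) by simp
      hence "(0 - int t) mod int g = int b mod int g" by (metis minus_mod_self2)
      thus ?thesis using assms(4) by (metis nat_int zmod_int mod_less)
    qed
    have "S x1 i j = theta0 g \<theta> i j ((a + b) mod g) - (1 / real g) * (\<Sum>c\<in>{1..<g}. \<theta> i j c)"
      unfolding S_def S_eval[OF g] using ij m1 by (simp add: x1_x2_x3_x4_def X_def)
    moreover have "S x2 i j = theta0 g \<theta> i j a - (1 / real g) * (\<Sum>c\<in>{1..<g}. \<theta> i j c)"
      unfolding S_def S_eval[OF g] using ij assms(3) by (simp add: x1_x2_x3_x4_def X_def)
    moreover have "S x3 i j = theta0 g \<theta> i j b - (1 / real g) * (\<Sum>c\<in>{1..<g}. \<theta> i j c)"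
      unfolding S_def S_eval[OF g] using ij m3 by (simp add: x1_x2_x3_x4_def X_def)
    moreover have "S x4 i j = theta0 g \<theta> i j 0 - (1 / real g) * (\<Sum>c\<in>{1..<g}. \<theta> i j c)"
      unfolding S_def S_eval[OF g] using ij by (simp add: x1_x2_x3_x4_def X_def)
    moreover have "theta0 g \<theta> i j 0 = 0" by (simp add: theta0_def)
    ultimately show ?thesis by simp
  qed
  finally have C: "dotZ g k \<theta> x1 - dotZ g k \<theta> x2 - dotZ g k \<theta> x3 + dotZ g k \<theta> x4
     = theta0 g \<theta> i j ((a + b) mod g) - theta0 g \<theta> i j a - theta0 g \<theta> i j b" .
  show ?thesis
  proof (intro exI conjI)
    show "\<bar>- (e1 + e2)\<bar> < 2 * \<epsilon>" using e1 e2 by linarith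
    show "theta0 g \<theta> i j a + theta0 g \<theta> i j b
      = theta0 g \<theta> i j ((a + b) mod g) + - (e1 + e2) + 2 * pi * real_of_int (- (z1 + z2))"
      using C h1 h2 by (simp add: algebra_simps)
  qed
qed

end
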